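(* For all integers $t\ge 2$, $\ell\ge2$ and $1\le r\le \ell$ satisfying $\ell<r(r+1)$, the braid graph $B_t=B(\ell,r,t)$ satisfies $m_{B_t}=d_{B_t}$.
   Context: For a graph $G$ with $v_G>1$ vertices and $e_G$ edges, its density is $d_G=\frac{e_G}{v_G-1}$ and its maximum density is $m_G=\max\{d_H: H\subseteq G,\ v_H>1\}$. Two sequences of vertices $(v_1,\dots,v_r)$ and $(u_1,\dots,u_r)$ form an $r$-bridge if for each $i=1,\dots,r$ the vertex $v_i$ is adjacent to all of $u_1,\dots,u_i$. For $t\ge1$, $\ell\ge2$, $1\le r\le\ell$, the braid graph $B(\ell,r,t)$ consists of $t$ vertex-disjoint $\ell$-cliques $K^{(1)}_\ell,\dots,K^{(t)}_\ell$, each with its vertices linearly ordered, where for each $i=1,\dots,t-1$ the last $r$ vertices of $K^{(i)}_\ell$ (in order, as $(v_1,\dots,v_r)$) and the first $r$ vertices of $K^{(i+1)}_\ell$ (in order, as $(u_1,\dots,u_r)$) form an $r$-bridge, and there are no other edges. Thus $d_{B_t}=\frac{t\binom{\ell}{2}+(t-1)\binom{r+1}{2}}{t\ell-1}$. *)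

theory Defs
  imports Complex_Main
begin

text \<open>Simple graphs are given by a vertex set V and an edge set E of 2-element subsets of V.\<close>

definition density :: "'a set \<Rightarrow> 'a set set \<Rightarrow> real" where
  "density V E = real (card E) / (real (card V) - 1)"

definition max_density :: "'a set \<Rightarrow> 'a set set \<Rightarrow> real" where
  "max_density V E = Max {density V' E' | V' E'.
      V' \<subseteq> V \<and> E' \<subseteq> E \<and> (\<forall>e\<in>E'. e \<subseteq> V') \<and> card V' > 1}"

text \<open>Braid graph B(l,r,t): vertex (i,j) is the j-th vertex (0-indexed) of the i-th clique (0-indexed).
  The r-bridge between clique i and i+1: v_k = (i, l-r+k-1), u_k = (i+1, k-1) for k = 1..r,
  with v_k adjacent to u_1..u_k; i.e. (i, l-r+a) ~ (i+1, b) iff b \<le> a < r.\<close>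

definition braid_V :: "nat \<Rightarrow> nat \<Rightarrow> (nat \<times> nat) set" where
  "braid_V l t = {0..<t} \<times> {0..<l}"

definition braid_E :: "nat \<Rightarrow> nat \<Rightarrow> nat \<Rightarrow> (nat \<times> nat) set set" where
  "braid_E l r t =
     {{(i, j), (i, j')} | i j j'. i < t \<and> j < l \<and> j' < l \<and> j \<noteq> j'}
   \<union> {{(i, l - r + a), (i + 1, b)} | i a b. i + 1 < t \<and> b \<le> a \<and> a < r}"

end

theory Submission
  imports Defs
begin


lemma real_choose2: "real (n choose 2) = real n * (real n - 1) / 2"
  by (induction n) (auto simp: numeral_2_eq_2 field_simps)

definition gfun :: "nat \<Rightarrow> nat \<Rightarrow> real" where
  "gfun r x = (real r - real (min x r) + 1) * (real r - real (min x r)) / 2"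

lemma per_clique:
  fixes l r x :: nat
  assumes xl: "x \<le> l" and rl: "r \<le> l" and l0: "l > 0"
  shows "(real l - x) * ((real r * (r + 1) - l) / (2 * l) - (real x - 1) / 2) \<le> gfun r x"
proof (cases "x \<le> r")
  case True
  have m: "min x r = x" using True by simp
  have nn: "(real l - r) * (real l - r - 1) \<ge> 0"
  proof (cases "l = r")
    case True then show ?thesis by simp
  next
    case False
    then have "real l - r \<ge> 1" using rl by linarith
    then show ?thesis by (intro mult_nonneg_nonneg) auto
  qed
  have id: "(real l - x) * ((real r * (r + 1) - l) / (2 * l) - (real x - 1) / 2)
      = gfun r x - real x * ((real l - r) * (real l - r - 1)) / (2 * l)"
    using l0 unfolding gfun_def m by (simp add: field_simps)
  have "real x * ((real l - r) * (real l - r - 1)) / (2 * l) \<ge> 0"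
    using nn l0 by simp
  then show ?thesis using id by linarith
next
  case False
  have m: "gfun r x = 0" unfolding gfun_def using False by simp
  have "real r * (r + 1) \<le> real l * x"
  proof -
    have "r * (r + 1) \<le> l * x" using False rl by (intro mult_mono) auto
    then show ?thesis by (metis of_nat_1 of_nat_add of_nat_le_iff of_nat_mult)
  qed
  then have "(real r * (r + 1) - l) / (2 * l) \<le> (real x - 1) / 2"
    using l0 by (simp add: field_simps)
  moreover have "real l - x \<ge> 0" using xl by simp
  ultimately show ?thesis unfolding m by (simp add: mult_nonneg_nonpos)
qed



lemma seq01:
  fixes x :: "nat \<Rightarrow> nat"
  shows "(\<forall>i<T. x i \<le> 1) \<Longrightarrow> (\<Sum>i<T. x i) \<ge> 1 \<Longrightarrow> (\<Sum>i<T-1. x i * x (Suc i)) + 1 \<le> (\<Sum>i<T. x i)"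
proof (induction T)
  case 0 then show ?case by simp
next
  case (Suc T)
  show ?case
  proof (cases "T = 0")
    case True
    have "(\<Sum>i<Suc T. x i) = x 0" using True by simp
    moreover have "(\<Sum>i<Suc T - 1. x i * x (Suc i)) = 0" using True by simp
    ultimately show ?thesis using Suc.prems(2) by linarith
  next
    case False
    then obtain T' where T': "T = Suc T'" by (cases T) auto
    show ?thesis
    proof (cases "(\<Sum>i<T. x i) \<ge> 1")
      case True
      have IH: "(\<Sum>i<T-1. x i * x (Suc i)) + 1 \<le> (\<Sum>i<T. x i)"
        using Suc.IH Suc.prems True by auto
      have p: "x T' * x T \<le> x T" using Suc.prems T' by (cases "x T' = 0") auto
      have s1: "(\<Sum>i<Suc T - 1. x i * x (Suc i)) = (\<Sum>i<T-1. x i * x (Suc i)) + x T' * x T"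
        using T' by simp
      have s2: "(\<Sum>i<Suc T. x i) = (\<Sum>i<T. x i) + x T" by simp
      show ?thesis using IH p s1 s2 by linarith
    next
      case False
      then have "(\<Sum>i<T. x i) = 0" by linarith
      then have z: "\<forall>i<T. x i = 0" by simp
      have "(\<Sum>i<T'. x i * x (Suc i)) = 0" using z T' by simp
      then show ?thesis using Suc.prems z T' by simp
    qed
  qed
qed



lemma split_lessThan:
  fixes f :: "nat \<Rightarrow> real"
  assumes "m \<le> n"
  shows "(\<Sum>i<n. f i) = (\<Sum>i<m. f i) + (\<Sum>i\<in>{m..<n}. f i)"
proof -
  have "{..<n} = {..<m} \<union> {m..<n}" using assms by auto
  moreover have "{..<m} \<inter> {m..<n} = {}" by auto
  ultimately show ?thesis by (simp add: sum.union_disjoint)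
qed

lemma key_numeric:
  fixes x bb :: "nat \<Rightarrow> nat" and T l r :: nat
  assumes T1: "T \<ge> 1" and l2: "l \<ge> 2" and rl: "r \<le> l" and lr: "l \<le> r*(r+1)"
    and xl: "\<forall>i<T. x i \<le> l" and n1: "(\<Sum>i<T. x i) \<ge> 1"
    and b1: "\<forall>i. Suc i < T \<longrightarrow> real (bb i) \<le> real r * (real r + 1) / 2 - gfun r (x i)"
    and b2: "\<forall>i. Suc i < T \<longrightarrow> real (bb i) \<le> real r * (real r + 1) / 2 - gfun r (x (Suc i))"
    and b3: "\<forall>i. Suc i < T \<longrightarrow> bb i \<le> x i * x (Suc i)"
  shows "real ((\<Sum>i<T. x i choose 2) + (\<Sum>i<T-1. bb i))
     \<le> ((real T * (real l * (real l - 1) / 2) + (real T - 1) * (real r * (real r + 1) / 2))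
          / (real T * real l - 1)) * (real (\<Sum>i<T. x i) - 1)"
proof -
  define Bv where "Bv = real r * (real r + 1) / 2"
  define c where "c = Bv - real l / 2"
  define \<epsilon> where "\<epsilon> = (real T - 1) * c / (real T * real l - 1)"
  define n where "n = real (\<Sum>i<T. x i)"
  define d where "d = real l / 2 + \<epsilon>"
  have Tl: "real T * real l - 1 > 0"
  proof -
    have "real T * real l \<ge> 1 * 2" using T1 l2 by (intro mult_mono) auto
    then show ?thesis by linarith
  qed
  have c0: "c \<ge> 0"
  proof -
    have "real l \<le> real (r * (r + 1))" using lr by (simp only: of_nat_le_iff)
    then show ?thesis unfolding c_def Bv_def by (simp add: algebra_simps)
  qed
  have eps0: "\<epsilon> \<ge> 0" unfolding \<epsilon>_def using Tl c0 T1 by simp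
  have epsid: "\<epsilon> * (real T * real l - 1) = (real T - 1) * c"
    unfolding \<epsilon>_def using Tl by simp
  have dId: "d * (real T * real l - 1) = real T * (real l * (real l - 1) / 2) + (real T - 1) * Bv"
  proof -
    have "d * (real T * real l - 1) = real l / 2 * (real T * real l - 1) + (real T - 1) * c"
      unfolding d_def using epsid by (simp add: algebra_simps)
    then show ?thesis unfolding c_def by (simp add: field_simps)
  qed
  have dfrac: "(real T * (real l * (real l - 1) / 2) + (real T - 1) * (real r * (real r + 1) / 2))
          / (real T * real l - 1) = d"
    using dId Tl unfolding Bv_def by (simp add: field_simps)
  have n1': "n \<ge> 1"
  proof -
    have "real (\<Sum>i<T. x i) \<ge> real (1::nat)" by (rule of_nat_mono[OF n1])
    then show ?thesis unfolding n_def by (simp only: of_nat_1)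
  qed
  have eexp: "real ((\<Sum>i<T. x i choose 2) + (\<Sum>i<T-1. bb i))
      = (\<Sum>i<T. real (x i choose 2)) + (\<Sum>i<T-1. real (bb i))" by simp
  have main: "real ((\<Sum>i<T. x i choose 2) + (\<Sum>i<T-1. bb i)) \<le> d * (n - 1)"
  proof (cases "\<forall>i<T. x i \<le> 1")
    case True
    have "x i choose 2 = 0" if "i < T" for i
    proof -
      have "x i \<le> 1" using True that by simp
      then show ?thesis by (simp add: binomial_eq_0)
    qed
    then have C0: "(\<Sum>i<T. x i choose 2) = 0" by simp
    have "(\<Sum>i<T-1. bb i) \<le> (\<Sum>i<T-1. x i * x (Suc i))"
      using b3 by (intro sum_mono) auto
    also have "\<dots> + 1 \<le> (\<Sum>i<T. x i)" using seq01[of T x] True n1 by simp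
    finally have "real (\<Sum>i<T-1. bb i) \<le> n - 1" unfolding n_def by linarith
    moreover have "d \<ge> 1" unfolding d_def using l2 eps0 by simp
    moreover have "(d - 1) * (n - 1) \<ge> 0" using \<open>d \<ge> 1\<close> n1' by simp
    then have "d * (n - 1) \<ge> n - 1" by (simp add: algebra_simps)
    moreover have "real ((\<Sum>i<T. x i choose 2) + (\<Sum>i<T-1. bb i)) = real (\<Sum>i<T-1. bb i)"
      by (simp only: C0 add_0)
    ultimately show ?thesis by linarith
  next
    case False
    then obtain i0 where i0: "i0 < T" "x i0 \<ge> 2" by force
    define M where "M = Max (x ` {..<T})"
    have "M \<in> x ` {..<T}" unfolding M_def using i0 by (intro Max_in) auto
    then obtain j where j: "j < T" "x j = M" by auto
    have jmax: "\<forall>i<T. x i \<le> x j" unfolding j(2) M_def by simp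
    have xj2: "x j \<ge> 2" using jmax i0 by force
    define D where "D i = (real l - real (x i)) * (\<epsilon> - (real (x i) - 1) / 2)" for i
    have cle: "c / real l - \<epsilon> = c * (real l - 1) / (real l * (real T * real l - 1))"
      unfolding \<epsilon>_def using Tl l2 by (simp add: field_simps)
    have cle0: "c / real l - \<epsilon> \<ge> 0" unfolding cle using c0 l2 Tl by simp
    have cle2: "(real T - 1) * (c / real l - \<epsilon>) = \<epsilon> * (real l - 1) / real l"
      unfolding \<epsilon>_def using Tl l2 by (simp add: field_simps)
    have cl: "c / real l \<le> real l / 2"
    proof -
      have "real r * (real r + 1) \<le> real l * (real l + 1)" using rl by (intro mult_mono) auto
      then have "c \<le> real l * real l / 2" unfolding c_def Bv_def by (simp add: algebra_simps)
      then show ?thesis using l2 by (simp add: field_simps)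
    qed
    have epsl: "\<epsilon> / real l \<le> 1 / 2"
    proof -
      have "\<epsilon> \<le> real l / 2" using cle0 cl by linarith
      then have "\<epsilon> / real l \<le> (real l / 2) / real l" by (intro divide_right_mono) auto
      then show ?thesis using l2 by simp
    qed
    have Dle: "D i \<le> gfun r (x i) - (real l - x i) * (c / real l - \<epsilon>)" if "i < T" for i
    proof -
      have pc: "(real l - x i) * ((real r * (r + 1) - l) / (2 * l) - (real (x i) - 1) / 2) \<le> gfun r (x i)"
        using per_clique[of "x i" l r] xl that rl l2 by simp
      have "(real r * (r + 1) - l) / (2 * l) = c / real l"
        unfolding c_def Bv_def using l2 by (simp add: field_simps)
      then have "(real l - x i) * (c / real l - (real (x i) - 1) / 2) \<le> gfun r (x i)" using pc by simp
      moreover have "D i = (real l - x i) * (c / real l - (real (x i) - 1) / 2) - (real l - x i) * (c / real l - \<epsilon>)"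
        unfolding D_def by (simp add: algebra_simps)
      ultimately show ?thesis by linarith
    qed
    have Dj: "D j \<le> (real l - x j) * (\<epsilon> - 1 / 2)"
      unfolding D_def using xl j xj2 by (intro mult_left_mono) auto
    have S1: "(\<Sum>i<T. D i) = D j + (\<Sum>i\<in>{..<T}-{j}. D i)"
      using j by (simp add: sum.remove)
    have S2: "(\<Sum>i\<in>{..<T}-{j}. D i) \<le> (\<Sum>i\<in>{..<T}-{j}. gfun r (x i) - (real l - x i) * (c / real l - \<epsilon>))"
      using Dle by (intro sum_mono) auto
    have S2': "(\<Sum>i\<in>{..<T}-{j}. gfun r (x i) - (real l - x i) * (c / real l - \<epsilon>))
       = (\<Sum>i\<in>{..<T}-{j}. gfun r (x i)) - (\<Sum>i\<in>{..<T}-{j}. (real l - x i) * (c / real l - \<epsilon>))"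
      by (simp add: sum_subtractf)
    have S3: "(\<Sum>i\<in>{..<T}-{j}. (real l - x i) * (c / real l - \<epsilon>)) \<ge> (\<Sum>i\<in>{..<T}-{j}. (real l - x j) * (c / real l - \<epsilon>))"
      using jmax cle0 by (intro sum_mono mult_right_mono) auto
    have S3': "(\<Sum>i\<in>{..<T}-{j}. (real l - x j) * (c / real l - \<epsilon>)) = (real T - 1) * ((real l - x j) * (c / real l - \<epsilon>))"
      using j T1 by (simp add: of_nat_diff)
    have S4: "(real T - 1) * ((real l - x j) * (c / real l - \<epsilon>)) = (real l - x j) * (\<epsilon> * (real l - 1) / real l)"
      using cle2 by (metis mult.left_commute)
    have S5: "(real l - x j) * (\<epsilon> - 1 / 2) - (real l - x j) * (\<epsilon> * (real l - 1) / real l) \<le> 0"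
    proof -
      have "(real l - x j) * (\<epsilon> - 1 / 2) - (real l - x j) * (\<epsilon> * (real l - 1) / real l)
          = (real l - x j) * (\<epsilon> / real l - 1 / 2)" using l2 by (simp add: field_simps)
      moreover have "(real l - x j) * (\<epsilon> / real l - 1 / 2) \<le> 0"
        using epsl xl j by (intro mult_nonneg_nonpos) auto
      ultimately show ?thesis by linarith
    qed
    have S6: "(\<Sum>i\<in>{..<T}-{j}. gfun r (x i)) \<le> (\<Sum>i<T-1. Bv - real (bb i))"
    proof -
      have U: "{..<T}-{j} = {..<j} \<union> {Suc j..<T}" using j by auto
      have "(\<Sum>i\<in>{..<T}-{j}. gfun r (x i)) = (\<Sum>i<j. gfun r (x i)) + (\<Sum>i\<in>{Suc j..<T}. gfun r (x i))"
        unfolding U by (rule sum.union_disjoint) auto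
      also have "(\<Sum>i\<in>{Suc j..<T}. gfun r (x i)) = (\<Sum>i\<in>{j..<T-1}. gfun r (x (Suc i)))"
      proof -
        have "T = Suc (T - 1)" using T1 by simp
        then have "{Suc j..<T} = {Suc j..<Suc (T-1)}" by simp
        then show ?thesis by (simp only: sum.shift_bounds_Suc_ivl)
      qed
      also have "(\<Sum>i<j. gfun r (x i)) \<le> (\<Sum>i<j. Bv - real (bb i))"
      proof (intro sum_mono)
        fix i assume "i \<in> {..<j}"
        then have "Suc i < T" using j by auto
        then show "gfun r (x i) \<le> Bv - real (bb i)" using b1 unfolding Bv_def by fastforce
      qed
      also have "(\<Sum>i\<in>{j..<T-1}. gfun r (x (Suc i))) \<le> (\<Sum>i\<in>{j..<T-1}. Bv - real (bb i))"
      proof (intro sum_mono)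
        fix i assume "i \<in> {j..<T-1}"
        then have "Suc i < T" by auto
        then show "gfun r (x (Suc i)) \<le> Bv - real (bb i)" using b2 unfolding Bv_def by fastforce
      qed
      also have "(\<Sum>i<j. Bv - real (bb i)) + (\<Sum>i\<in>{j..<T-1}. Bv - real (bb i)) = (\<Sum>i<T-1. Bv - real (bb i))"
        using split_lessThan[of j "T-1" "\<lambda>i. Bv - real (bb i)"] j by simp
      finally show ?thesis by simp
    qed
    have KEY: "(\<Sum>i<T. D i) \<le> (\<Sum>i<T-1. Bv - real (bb i))"
      using S1 S2 S2' S3 S3' S4 S5 S6 Dj by linarith
    have Dexp: "D i = real l * \<epsilon> + real l / 2 - (real l / 2 + \<epsilon>) * real (x i) + real (x i choose 2)" for i
      unfolding D_def real_choose2 by (simp add: field_simps)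
    have SD: "(\<Sum>i<T. D i) = real T * (real l * \<epsilon> + real l / 2) - (real l / 2 + \<epsilon>) * n + (\<Sum>i<T. real (x i choose 2))"
      unfolding Dexp n_def by (simp add: sum.distrib sum_subtractf sum_distrib_left)
    have SB: "(\<Sum>i<T-1. Bv - real (bb i)) = (real T - 1) * Bv - (\<Sum>i<T-1. real (bb i))"
      using T1 by (simp add: sum_subtractf of_nat_diff)
    have fin: "(real T - 1) * Bv - real T * (real l * \<epsilon> + real l / 2) + (real l / 2 + \<epsilon>) * n
        = d * (n - 1) + ((real T - 1) * c - \<epsilon> * (real T * real l - 1))"
      unfolding d_def c_def by (simp add: field_simps)
    show ?thesis using KEY SD SB fin epsid eexp by linarith
  qed
  show ?thesis using main dfrac unfolding n_def by simp
qed



lemma sum_distinct_nat: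
  fixes A :: "nat set"
  shows "finite A \<Longrightarrow> card A * (card A - 1) \<le> 2 * \<Sum>A"
proof (induction "card A" arbitrary: A)
  case 0 then show ?case by simp
next
  case (Suc n A)
  then have ne: "A \<noteq> {}" by auto
  define m where "m = Max A"
  have mA: "m \<in> A" unfolding m_def using Suc.prems ne by simp
  have "A \<subseteq> {..m}" unfolding m_def using Suc.prems by auto
  then have "card A \<le> Suc m" using card_mono[of "{..m}" A] by simp
  then have nm: "n \<le> m" using Suc.hyps(2) by simp
  have cA': "card (A - {m}) = n" using Suc.hyps(2) mA Suc.prems by simp
  have IH: "n * (n - 1) \<le> 2 * \<Sum>(A - {m})" using Suc.hyps(1)[of "A - {m}"] cA' Suc.prems by simp
  have sA: "\<Sum>A = m + \<Sum>(A - {m})" using Suc.prems mA by (simp add: sum.remove)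
  have e1: "Suc n * n = n * (n - 1) + 2 * n" by (cases n) auto
  have e2: "card A * (card A - 1) = Suc n * n" using Suc.hyps(2) by (metis diff_Suc_1)
  show ?case using IH sA nm e1 e2 by linarith
qed

lemma hbound:
  fixes A :: "nat set" and w v :: "nat \<Rightarrow> nat"
  assumes fin: "finite A" and inj: "inj_on v A" and wv: "\<forall>a\<in>A. w a + v a = r"
    and K: "K \<le> (\<Sum>a\<in>A. w a)" and cm: "card A \<le> m" and mr: "m \<le> r"
  shows "real K \<le> real m * real r - real m * (real m - 1) / 2"
proof -
  define p where "p = card A"
  have s: "(\<Sum>a\<in>A. w a) + (\<Sum>a\<in>A. v a) = p * r"
    unfolding p_def using wv by (simp add: sum.distrib[symmetric])
  have "(\<Sum>a\<in>A. v a) = \<Sum>(v ` A)" using inj by (simp add: sum.reindex)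
  moreover have "card (v ` A) = p" unfolding p_def using inj by (simp add: card_image)
  ultimately have "p * (p - 1) \<le> 2 * (\<Sum>a\<in>A. v a)"
    using sum_distinct_nat[of "v ` A"] fin by simp
  then have "2 * K + p * (p - 1) \<le> 2 * (p * r)" using s K by linarith
  then have "real (2 * K + p * (p - 1)) \<le> real (2 * (p * r))" by (simp only: of_nat_le_iff)
  moreover have "real (p * (p - 1)) = real p * (real p - 1)" by (cases p) (auto simp: algebra_simps)
  ultimately have "2 * real K + real p * (real p - 1) \<le> 2 * (real p * real r)"
    by (simp only: of_nat_add of_nat_mult of_nat_numeral)
  then have hp: "real K \<le> real p * real r - real p * (real p - 1) / 2" by simp
  have "(real m - real p) * (real r - (real m + real p - 1) / 2) \<ge> 0"
    using cm mr unfolding p_def by (intro mult_nonneg_nonneg) auto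
  then have "real p * real r - real p * (real p - 1) / 2 \<le> real m * real r - real m * (real m - 1) / 2"
    by (simp add: field_simps)
  then show ?thesis using hp by linarith
qed

definition rowset :: "(nat \<times> nat) set \<Rightarrow> nat \<Rightarrow> nat \<Rightarrow> nat set" where
  "rowset S l i = {j. j < l \<and> (i, j) \<in> S}"

definition brp :: "(nat \<times> nat) set \<Rightarrow> nat \<Rightarrow> nat \<Rightarrow> nat \<Rightarrow> (nat \<times> nat) set" where
  "brp S l r i = {(a, b). a < r \<and> b \<le> a \<and> (i, l - r + a) \<in> S \<and> (Suc i, b) \<in> S}"

lemma gfun_alt: "real r * (real r + 1) / 2 - gfun r x
   = real (min x r) * real r - real (min x r) * (real (min x r) - 1) / 2"
  unfolding gfun_def by (simp add: field_simps)

lemma brp_fin: "brp S l r i \<subseteq> {..<r} \<times> {..<r}" "finite (brp S l r i)"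
proof -
  show "brp S l r i \<subseteq> {..<r} \<times> {..<r}" unfolding brp_def by auto
  then show "finite (brp S l r i)" by (rule finite_subset) auto
qed

lemma bridge1:
  assumes rl: "r \<le> l"
  shows "real (card (brp S l r i)) \<le> real r * (real r + 1) / 2 - gfun r (card (rowset S l i))"
proof -
  define P where "P = {a. a < r \<and> (i, l - r + a) \<in> S}"
  define N where "N a = {b. b \<le> a \<and> (Suc i, b) \<in> S}" for a
  have eq: "brp S l r i = Sigma P N" unfolding brp_def P_def N_def by auto
  have finP: "finite P" unfolding P_def by auto
  have "card (brp S l r i) = (\<Sum>a\<in>P. card (N a))"
    unfolding eq using finP by (simp add: N_def)
  also have "\<dots> \<le> (\<Sum>a\<in>P. a + 1)"
  proof (intro sum_mono)
    fix a show "card (N a) \<le> a + 1" using card_mono[of "{..a}" "N a"] unfolding N_def by auto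
  qed
  finally have K: "card (brp S l r i) \<le> (\<Sum>a\<in>P. a + 1)" .
  have inj: "inj_on (\<lambda>a. r - 1 - a) P" unfolding P_def by (auto simp: inj_on_def)
  have wv: "\<forall>a\<in>P. (a + 1) + (r - 1 - a) = r" unfolding P_def by auto
  have c1: "card P \<le> card (rowset S l i)"
  proof -
    have "(\<lambda>a. l - r + a) ` P \<subseteq> rowset S l i" unfolding P_def rowset_def using rl by auto
    moreover have "inj_on (\<lambda>a. l - r + a) P" by (auto simp: inj_on_def)
    ultimately show ?thesis using card_inj_on_le[of "\<lambda>a. l - r + a" P "rowset S l i"]
      unfolding rowset_def by auto
  qed
  have c2: "card P \<le> r" using card_mono[of "{..<r}" P] unfolding P_def by auto
  have "real (card (brp S l r i)) \<le> real (min (card (rowset S l i)) r) * real r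
      - real (min (card (rowset S l i)) r) * (real (min (card (rowset S l i)) r) - 1) / 2"
    using hbound[OF finP inj wv K, of "min (card (rowset S l i)) r"] c1 c2 by simp
  then show ?thesis by (simp add: gfun_alt)
qed

lemma bridge2:
  assumes rl: "r \<le> l"
  shows "real (card (brp S l r i)) \<le> real r * (real r + 1) / 2 - gfun r (card (rowset S l (Suc i)))"
proof -
  define Q where "Q = {b. b < r \<and> (Suc i, b) \<in> S}"
  define N where "N b = {a. a < r \<and> b \<le> a \<and> (i, l - r + a) \<in> S}" for b
  have eq: "brp S l r i = (\<lambda>(b, a). (a, b)) ` Sigma Q N" unfolding brp_def Q_def N_def by auto
  have finQ: "finite Q" unfolding Q_def by auto
  have "card (brp S l r i) = card (Sigma Q N)"
    unfolding eq by (rule card_image) (auto simp: inj_on_def)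
  also have "\<dots> = (\<Sum>b\<in>Q. card (N b))"
    using finQ by (simp add: N_def)
  also have "\<dots> \<le> (\<Sum>b\<in>Q. r - b)"
  proof (intro sum_mono)
    fix b
    have "N b \<subseteq> {b..<r}" unfolding N_def by auto
    then have "card (N b) \<le> card {b..<r}" by (rule card_mono[rotated]) auto
    then show "card (N b) \<le> r - b" by simp
  qed
  finally have K: "card (brp S l r i) \<le> (\<Sum>b\<in>Q. r - b)" .
  have inj: "inj_on (\<lambda>b. b) Q" by simp
  have wv: "\<forall>b\<in>Q. (r - b) + b = r" unfolding Q_def by auto
  have c1: "card Q \<le> card (rowset S l (Suc i))"
  proof -
    have "Q \<subseteq> rowset S l (Suc i)" unfolding Q_def rowset_def using rl by auto
    then show ?thesis by (rule card_mono[rotated]) (auto simp: rowset_def)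
  qed
  have c2: "card Q \<le> r" using card_mono[of "{..<r}" Q] unfolding Q_def by auto
  have "real (card (brp S l r i)) \<le> real (min (card (rowset S l (Suc i))) r) * real r
      - real (min (card (rowset S l (Suc i))) r) * (real (min (card (rowset S l (Suc i))) r) - 1) / 2"
    using hbound[OF finQ inj wv K, of "min (card (rowset S l (Suc i))) r"] c1 c2 by simp
  then show ?thesis by (simp add: gfun_alt)
qed

lemma bridge3:
  assumes rl: "r \<le> l"
  shows "card (brp S l r i) \<le> card (rowset S l i) * card (rowset S l (Suc i))"
proof -
  have "brp S l r i \<subseteq> (\<lambda>(p, q). (p - (l - r), q)) ` (rowset S l i \<times> rowset S l (Suc i))"
  proof
    fix z assume z: "z \<in> brp S l r i"
    then obtain a b where ab: "z = (a, b)" "a < r" "b \<le> a" "(i, l - r + a) \<in> S" "(Suc i, b) \<in> S"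
      unfolding brp_def by auto
    have "(l - r + a, b) \<in> rowset S l i \<times> rowset S l (Suc i)"
      using ab rl unfolding rowset_def by auto
    moreover have "z = (\<lambda>(p, q). (p - (l - r), q)) (l - r + a, b)" using ab by simp
    ultimately show "z \<in> (\<lambda>(p, q). (p - (l - r), q)) ` (rowset S l i \<times> rowset S l (Suc i))" by blast
  qed
  then have "card (brp S l r i) \<le> card ((\<lambda>(p, q). (p - (l - r), q)) ` (rowset S l i \<times> rowset S l (Suc i)))"
    by (rule card_mono[rotated]) (auto simp: rowset_def)
  also have "\<dots> \<le> card (rowset S l i \<times> rowset S l (Suc i))" by (rule card_image_le) (auto simp: rowset_def)
  finally show ?thesis by (simp add: card_cartesian_product)
qed



definition CL :: "(nat \<times> nat) set \<Rightarrow> nat \<Rightarrow> nat \<Rightarrow> (nat \<times> nat) set set" where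
  "CL S l i = {X. X \<subseteq> Pair i ` rowset S l i \<and> card X = 2}"

definition BR :: "(nat \<times> nat) set \<Rightarrow> nat \<Rightarrow> nat \<Rightarrow> nat \<Rightarrow> (nat \<times> nat) set set" where
  "BR S l r i = (\<lambda>(a, b). {(i, l - r + a), (Suc i, b)}) ` brp S l r i"

lemma rowset_fin: "finite (rowset S l i)" unfolding rowset_def by auto

lemma card_CL: "card (CL S l i) = card (rowset S l i) choose 2"
proof -
  have "card (CL S l i) = card (Pair i ` rowset S l i) choose 2"
    unfolding CL_def using n_subsets[of "Pair i ` rowset S l i" 2] rowset_fin by simp
  also have "card (Pair i ` rowset S l i) = card (rowset S l i)"
    by (rule card_image) (auto simp: inj_on_def)
  finally show ?thesis .
qed

lemma fin_CL: "finite (CL S l i)"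
proof -
  have "CL S l i \<subseteq> Pow (Pair i ` rowset S l i)" unfolding CL_def by auto
  then show ?thesis by (rule finite_subset) (simp add: rowset_fin)
qed

lemma card_BR: "card (BR S l r i) = card (brp S l r i)"
  unfolding BR_def
proof (rule card_image)
  show "inj_on (\<lambda>(a, b). {(i, l - r + a), (Suc i, b)}) (brp S l r i)"
  proof (rule inj_onI, clarify)
    fix a b a' b'
    assume h: "{(i, l - r + a), (Suc i, b)} = {(i, l - r + a'), (Suc i, b')}"
      and "(a, b) \<in> brp S l r i" "(a', b') \<in> brp S l r i"
    then have "a < r" "a' < r" unfolding brp_def by auto
    have "(i, l - r + a) \<in> {(i, l - r + a'), (Suc i, b')}" using h by blast
    then have "l - r + a = l - r + a'" by auto
    moreover have "(Suc i, b) \<in> {(i, l - r + a'), (Suc i, b')}" using h by blast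
    then have "b = b'" by auto
    ultimately show "a = a' \<and> b = b'" by simp
  qed
qed

lemma fin_BR: "finite (BR S l r i)" unfolding BR_def using brp_fin by simp

lemma edges_eq:
  assumes SV: "S \<subseteq> braid_V l t" and rl: "r \<le> l"
  shows "{e \<in> braid_E l r t. e \<subseteq> S} = (\<Union>i\<in>{..<t}. CL S l i) \<union> (\<Union>i\<in>{..<t-1}. BR S l r i)"
proof
  show "{e \<in> braid_E l r t. e \<subseteq> S} \<subseteq> (\<Union>i\<in>{..<t}. CL S l i) \<union> (\<Union>i\<in>{..<t-1}. BR S l r i)"
  proof
    fix e assume "e \<in> {e \<in> braid_E l r t. e \<subseteq> S}"
    then have eE: "e \<in> braid_E l r t" and eS: "e \<subseteq> S" by auto
    show "e \<in> (\<Union>i\<in>{..<t}. CL S l i) \<union> (\<Union>i\<in>{..<t-1}. BR S l r i)"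
      using eE unfolding braid_E_def
    proof (elim UnE CollectE exE conjE)
      fix i j j' assume h: "e = {(i, j), (i, j')}" "i < t" "j < l" "j' < l" "j \<noteq> j'"
      have "e \<subseteq> Pair i ` rowset S l i" using h eS unfolding rowset_def by auto
      moreover have "card e = 2" using h by simp
      ultimately have "e \<in> CL S l i" unfolding CL_def by simp
      then show ?thesis using h by auto
    next
      fix i a b assume h: "e = {(i, l - r + a), (i + 1, b)}" "i + 1 < t" "b \<le> a" "a < r"
      have "(a, b) \<in> brp S l r i" using h eS unfolding brp_def by auto
      then have "e \<in> BR S l r i" unfolding BR_def using h by force
      then show ?thesis using h by auto
    qed
  qed
next
  show "(\<Union>i\<in>{..<t}. CL S l i) \<union> (\<Union>i\<in>{..<t-1}. BR S l r i) \<subseteq> {e \<in> braid_E l r t. e \<subseteq> S}"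
  proof
    fix e assume "e \<in> (\<Union>i\<in>{..<t}. CL S l i) \<union> (\<Union>i\<in>{..<t-1}. BR S l r i)"
    then show "e \<in> {e \<in> braid_E l r t. e \<subseteq> S}"
    proof (elim UnE UN_E)
      fix i assume i: "i \<in> {..<t}" and eC: "e \<in> CL S l i"
      then obtain p q where pq: "e = {p, q}" "p \<noteq> q" unfolding CL_def by (auto simp: card_2_iff)
      have sub: "e \<subseteq> Pair i ` rowset S l i" using eC unfolding CL_def by auto
      then obtain j j' where jj: "p = (i, j)" "q = (i, j')" "j < l" "j' < l" "(i, j) \<in> S" "(i, j') \<in> S"
        using pq unfolding rowset_def by auto
      have "e \<in> braid_E l r t" unfolding braid_E_def using pq jj i by auto
      moreover have "e \<subseteq> S" using pq jj by auto
      ultimately show ?thesis by simp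
    next
      fix i assume i: "i \<in> {..<t-1}" and eB: "e \<in> BR S l r i"
      then obtain a b where ab: "(a, b) \<in> brp S l r i" "e = {(i, l - r + a), (Suc i, b)}"
        unfolding BR_def by auto
      then have h: "a < r" "b \<le> a" "(i, l - r + a) \<in> S" "(Suc i, b) \<in> S" unfolding brp_def by auto
      have "\<exists>i' a' b'. e = {(i', l - r + a'), (i' + 1, b')} \<and> i' + 1 < t \<and> b' \<le> a' \<and> a' < r"
        using ab(2) h i by (intro exI[of _ i] exI[of _ a] exI[of _ b] conjI) simp_all
      then have "e \<in> braid_E l r t" unfolding braid_E_def by blast
      moreover have "e \<subseteq> S" using ab h by auto
      ultimately show ?thesis by simp
    qed
  qed
qed

lemma edges_count:
  assumes SV: "S \<subseteq> braid_V l t" and rl: "r \<le> l"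
  shows "card {e \<in> braid_E l r t. e \<subseteq> S}
     = (\<Sum>i<t. card (rowset S l i) choose 2) + (\<Sum>i<t-1. card (brp S l r i))"
proof -
  have d1: "\<forall>i\<in>{..<t}. \<forall>j\<in>{..<t}. i \<noteq> j \<longrightarrow> CL S l i \<inter> CL S l j = {}"
  proof (intro ballI impI)
    fix i j :: nat assume "i \<noteq> j"
    show "CL S l i \<inter> CL S l j = {}"
    proof (rule ccontr)
      assume "CL S l i \<inter> CL S l j \<noteq> {}"
      then obtain X where X: "X \<in> CL S l i" "X \<in> CL S l j" by auto
      then have "X \<noteq> {}" unfolding CL_def by auto
      then obtain z where "z \<in> X" by auto
      then show False using X \<open>i \<noteq> j\<close> unfolding CL_def by auto
    qed
  qed
  have d2: "\<forall>i\<in>{..<t-1}. \<forall>j\<in>{..<t-1}. i \<noteq> j \<longrightarrow> BR S l r i \<inter> BR S l r j = {}"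
  proof (intro ballI impI)
    fix i j :: nat assume "i \<noteq> j"
    show "BR S l r i \<inter> BR S l r j = {}"
    proof (rule ccontr)
      assume "BR S l r i \<inter> BR S l r j \<noteq> {}"
      then obtain a b a' b' where h: "{(i, l - r + a), (Suc i, b)} = {(j, l - r + a'), (Suc j, b')}"
        unfolding BR_def by auto
      have "(i, l - r + a) \<in> {(j, l - r + a'), (Suc j, b')}" using h by blast
      moreover have "(j, l - r + a') \<in> {(i, l - r + a), (Suc i, b)}" using h by blast
      ultimately show False using \<open>i \<noteq> j\<close> by auto
    qed
  qed
  have d3: "(\<Union>i\<in>{..<t}. CL S l i) \<inter> (\<Union>i\<in>{..<t-1}. BR S l r i) = {}"
  proof (rule ccontr)
    assume "(\<Union>i\<in>{..<t}. CL S l i) \<inter> (\<Union>i\<in>{..<t-1}. BR S l r i) \<noteq> {}"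
    then obtain X i j where X: "X \<in> CL S l i" "X \<in> BR S l r j" by auto
    then obtain a b where ab: "X = {(j, l - r + a), (Suc j, b)}" unfolding BR_def by auto
    have "X \<subseteq> Pair i ` rowset S l i" using X unfolding CL_def by auto
    then show False using ab by auto
  qed
  have "card {e \<in> braid_E l r t. e \<subseteq> S}
      = card (\<Union>i\<in>{..<t}. CL S l i) + card (\<Union>i\<in>{..<t-1}. BR S l r i)"
    unfolding edges_eq[OF SV rl]
    by (rule card_Un_disjoint[OF _ _ d3]) (auto simp: fin_CL fin_BR)
  also have "card (\<Union>i\<in>{..<t}. CL S l i) = (\<Sum>i<t. card (CL S l i))"
    by (rule card_UN_disjoint) (auto simp: fin_CL d1)
  also have "card (\<Union>i\<in>{..<t-1}. BR S l r i) = (\<Sum>i<t-1. card (BR S l r i))"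
    by (rule card_UN_disjoint) (auto simp: fin_BR d2)
  finally show ?thesis by (simp add: card_CL card_BR)
qed



lemma card_rows:
  assumes SV: "S \<subseteq> braid_V l t"
  shows "card S = (\<Sum>i<t. card (rowset S l i))"
proof -
  have eq: "S = (\<Union>i\<in>{..<t}. Pair i ` rowset S l i)"
  proof
    show "S \<subseteq> (\<Union>i\<in>{..<t}. Pair i ` rowset S l i)"
    proof (clarify)
      fix a b assume ab: "(a, b) \<in> S"
      then have "a < t" "b < l" using SV unfolding braid_V_def by auto
      then show "(a, b) \<in> (\<Union>i\<in>{..<t}. Pair i ` rowset S l i)" using ab unfolding rowset_def by auto
    qed
    show "(\<Union>i\<in>{..<t}. Pair i ` rowset S l i) \<subseteq> S" unfolding rowset_def by auto
  qed
  have "card (\<Union>i\<in>{..<t}. Pair i ` rowset S l i) = (\<Sum>i<t. card (Pair i ` rowset S l i))"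
    by (rule card_UN_disjoint) (auto simp: rowset_fin)
  also have "\<dots> = (\<Sum>i<t. card (rowset S l i))"
    by (intro sum.cong refl card_image) (auto simp: inj_on_def)
  finally show ?thesis using eq by simp
qed

lemma card_tri: "real (card {(a, b). a < r \<and> b \<le> (a::nat)}) = real r * (real r + 1) / 2"
proof -
  have "{(a, b). a < r \<and> b \<le> (a::nat)} = Sigma {..<r} (\<lambda>a. {..a})" by auto
  then have "card {(a, b). a < r \<and> b \<le> (a::nat)} = (\<Sum>a<r. Suc a)" by simp
  moreover have "real (\<Sum>a<r. Suc a) = real r * (real r + 1) / 2"
    by (induction r) (auto simp: field_simps)
  ultimately show ?thesis by simp
qed

theorem proposition4p3:
  fixes l r t :: nat
  assumes "t \<ge> 2" and "l \<ge> 2" and "1 \<le> r" and "r \<le> l" and "l < r * (r + 1)"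
  shows "max_density (braid_V l t) (braid_E l r t) = density (braid_V l t) (braid_E l r t)"
proof -
  note t2 = assms(1) and l2 = assms(2) and rl = assms(4) and lr = assms(5)
  define V where "V = braid_V l t"
  define E where "E = braid_E l r t"
  define d where "d = (real t * (real l * (real l - 1) / 2) + (real t - 1) * (real r * (real r + 1) / 2))
          / (real t * real l - 1)"
  have EV: "\<forall>e\<in>E. e \<subseteq> V" unfolding E_def V_def braid_E_def braid_V_def using rl by auto
  have finV: "finite V" unfolding V_def braid_V_def by simp
  have finE: "finite E"
  proof -
    have "E \<subseteq> Pow V" using EV by auto
    then show ?thesis using finV by (meson finite_Pow_iff finite_subset)
  qed
  have cardV: "card V = t * l" unfolding V_def braid_V_def by (simp add: card_cartesian_product)
  have Eall: "{e \<in> E. e \<subseteq> V} = E" using EV by auto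
  have rowV: "rowset V l i = {..<l}" if "i < t" for i
    using that unfolding rowset_def V_def braid_V_def by auto
  have brpV: "brp V l r i = {(a, b). a < r \<and> b \<le> a}" if "i < t - 1" for i
    using that rl unfolding brp_def V_def braid_V_def by auto
  have cardE: "real (card E) = real t * (real l * (real l - 1) / 2) + (real t - 1) * (real r * (real r + 1) / 2)"
  proof -
    have "card E = (\<Sum>i<t. card (rowset V l i) choose 2) + (\<Sum>i<t-1. card (brp V l r i))"
      using edges_count[of V l t r] rl Eall unfolding V_def E_def by simp
    also have "(\<Sum>i<t. card (rowset V l i) choose 2) = (\<Sum>i<t. l choose 2)"
      using rowV by (intro sum.cong) auto
    also have "(\<Sum>i<t-1. card (brp V l r i)) = (\<Sum>i<t-1. card {(a, b). a < r \<and> b \<le> (a::nat)})"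
      using brpV by (intro sum.cong) auto
    finally have "card E = t * (l choose 2) + (t - 1) * card {(a, b). a < r \<and> b \<le> (a::nat)}" by simp
    then have "real (card E) = real t * real (l choose 2) + real (t - 1) * real (card {(a, b). a < r \<and> b \<le> (a::nat)})"
      by simp
    then show ?thesis using t2 by (simp add: real_choose2 card_tri of_nat_diff)
  qed
  have Tl: "real t * real l - 1 > 0"
  proof -
    have "real t * real l \<ge> 2 * 2" using t2 l2 by (intro mult_mono) auto
    then show ?thesis by linarith
  qed
  have densE: "density V E = d"
    unfolding density_def d_def cardE cardV by simp
  define SS where "SS = {density V' E' | V' E'.
      V' \<subseteq> V \<and> E' \<subseteq> E \<and> (\<forall>e\<in>E'. e \<subseteq> V') \<and> card V' > 1}"
  have finSS: "finite SS"
  proof -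
    have "SS \<subseteq> (\<lambda>(V', E'). density V' E') ` (Pow V \<times> Pow E)" unfolding SS_def by auto
    then show ?thesis by (rule finite_subset) (simp add: finV finE)
  qed
  have inSS: "density V E \<in> SS"
  proof -
    have "card V > 1" unfolding cardV using t2 l2
      by (metis less_le_trans mult_le_mono one_less_numeral_iff semiring_norm(76) nat_mult_1 less_imp_le_nat one_le_numeral order.trans)
    then show ?thesis unfolding SS_def using EV by blast
  qed
  have bound: "y \<le> d" if "y \<in> SS" for y
  proof -
    obtain V' E' where h: "y = density V' E'" "V' \<subseteq> V" "E' \<subseteq> E" "\<forall>e\<in>E'. e \<subseteq> V'" "card V' > 1"
      using \<open>y \<in> SS\<close> unfolding SS_def by blast
    have E'sub: "E' \<subseteq> {e \<in> E. e \<subseteq> V'}" using h by auto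
    have c1: "card E' \<le> card {e \<in> E. e \<subseteq> V'}" by (rule card_mono[OF _ E'sub]) (simp add: finE)
    have V'V: "V' \<subseteq> braid_V l t" using h unfolding V_def by simp
    have cnt: "card {e \<in> E. e \<subseteq> V'} = (\<Sum>i<t. card (rowset V' l i) choose 2) + (\<Sum>i<t-1. card (brp V' l r i))"
      unfolding E_def using edges_count[OF V'V rl] .
    have cV': "card V' = (\<Sum>i<t. card (rowset V' l i))" using card_rows[OF V'V] .
    have kn: "real ((\<Sum>i<t. card (rowset V' l i) choose 2) + (\<Sum>i<t-1. card (brp V' l r i)))
       \<le> d * (real (\<Sum>i<t. card (rowset V' l i)) - 1)"
      unfolding d_def
    proof (rule key_numeric)
      show "t \<ge> 1" using t2 by simp
      show "l \<ge> 2" by (rule l2)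
      show "r \<le> l" by (rule rl)
      show "l \<le> r * (r + 1)" using lr by simp
      show "\<forall>i<t. card (rowset V' l i) \<le> l"
      proof (intro allI impI)
        fix i show "card (rowset V' l i) \<le> l"
          using card_mono[of "{..<l}" "rowset V' l i"] unfolding rowset_def by auto
      qed
      show "(\<Sum>i<t. card (rowset V' l i)) \<ge> 1" using h(5) cV' by simp
      show "\<forall>i. Suc i < t \<longrightarrow> real (card (brp V' l r i)) \<le> real r * (real r + 1) / 2 - gfun r (card (rowset V' l i))"
        using bridge1[OF rl] by blast
      show "\<forall>i. Suc i < t \<longrightarrow> real (card (brp V' l r i)) \<le> real r * (real r + 1) / 2 - gfun r (card (rowset V' l (Suc i)))"
        using bridge2[OF rl] by blast
      show "\<forall>i. Suc i < t \<longrightarrow> card (brp V' l r i) \<le> card (rowset V' l i) * card (rowset V' l (Suc i))"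
        using bridge3[OF rl] by blast
    qed
    have "real (card E') \<le> d * (real (card V') - 1)"
      using kn c1 cnt cV' by (metis (no_types, lifting) of_nat_le_iff order.trans)
    moreover have "real (card V') - 1 > 0" using h(5) by simp
    ultimately have "real (card E') / (real (card V') - 1) \<le> d" by (simp add: divide_le_eq)
    then show ?thesis unfolding h(1) density_def .
  qed
  have "Max SS = density V E"
    by (rule Max_eqI[OF finSS]) (use bound densE inSS in auto)
  then show ?thesis unfolding max_density_def SS_def V_def E_def .
qed


end
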